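(* Let $M$ and $M'$ be models over the same signature. If $K$ and $K'$ are both least upper bounds of $\{M,M'\}$ with respect to subsumption $\sqsubseteq$, then $K$ and $K'$ are isomorphic.
   Context: Signature: finite set of types $\mathsf{TYPE}$, finite set of attributes $\mathsf{ATTR}$, relation symbols $\mathsf{REL}=\bigcup_{m>1}\mathsf{REL}_m$, a set $\mathsf{NNAME}$ of base-labels, a set $\mathsf{NVAR}$ of node variables and a set $\mathsf{WVAR}$ of wrapping variables (pairwise disjoint); node labels are $\mathsf{NLABEL}=\mathsf{NNAME}\uplus\mathsf{NVAR}$. A Feature Structure with Wrappings (FSW) is $F=\langle V,\mathcal W,\mathcal I\rangle$ where $V$ is a nonempty set of nodes, $\mathcal W$ is a set of pairwise disjoint nonempty subsets of $V$ (the wrappings, with $\mathcal W\cap V=\emptyset$), and $\mathcal I$ maps each type $t$ to a subset $\mathcal I(t)\subseteq V$, each attribute $\mathsf P$ to a partial function $\mathcal I(\mathsf P)$ from $V$ to $V\cup\mathcal W$, each $m$-ary relation symbol $r$ to a subset of $(V\cup\mathcal W)^m$, and is a partial map from $\mathsf{NNAME}$ to $V$. The w-sets are the elements of $\hat{\mathcal W}=\mathcal W\cup\{V\setminus\bigcup\mathcal W\}$, a partition of $V$; $[v]$ denotes the w-set containing $v$. A model is $M=\langle F,g\rangle$ with $g=\langle g_N,g_W\rangle$, $g_N:\mathsf{NVAR}\rightharpoonup V$, $g_W:\mathsf{WVAR}\rightharpoonup\mathcal W$. Write $\mathcal I_g(b)=\mathcal I(b)$ for base-labels, $\mathcal I_g(x)=g_N(x)$,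 $\mathcal I_g(T)=g_W(T)$, and $\mathcal I_g(k,\varepsilon)=\mathcal I_g(k)$, $\mathcal I_g(k,p\mathsf Q)=\mathcal I(\mathsf Q)(\mathcal I_g(k,p))$ for attribute words $p\in\mathsf{ATTR}^*$ (partial). Models are required to satisfy: (reachability) for every $v\in V$ there are $k\in\mathsf{NLABEL}$ and $p\in\mathsf{ATTR}^*$ with $\mathcal I_g(k)\in[v]$ and $\mathcal I_g(k,p)=v$; (non-escapability) for every $W\in\mathcal W$, $v\in W$ and $p\in\mathsf{ATTR}^*$, if $\mathcal I(p)(v)$ is defined then it lies in $[v]$. A homomorphism $h:M\to M'$ is a pair $h_V:V\to V'\uplus\mathcal W'$, $h_{\mathcal W}:\mathcal W\to\mathcal W'$ such that, writing $h$ for both (and extending it to $V\cup\mathcal W$): $h(\mathcal I(t))\subseteq\mathcal I'(t)$ for all types; if $\mathcal I(\mathsf P)(v)$ is defined then $\mathcal I'(\mathsf P)(h(v))$ is defined and equals $h(\mathcal I(\mathsf P)(v))$; $h(\mathcal I(r))\subseteq\mathcal I'(r)$ for all relations; if $\mathcal I(b)$ is defined then $h(\mathcal I(b))=\mathcal I'(b)$; if $v\in W\in\mathcal W$ then $h_V(v)\in h_{\mathcal W}(W)$; if $g(x)$ is defined (for $x\in\mathsf{NVAR}\uplus\mathsf{WVAR}$) then $h(g(x))=g'(x)$. Subsumption: $M\sqsubseteq M'$ iff there is a homomorphism $M\to M'$. $K$ is a least upper bound of $\{M,M'\}$ if $M\sqsubseteq K$, $M'\sqsubseteq K$, and $K\sqsubseteq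 K''$ for every $K''$ with $M\sqsubseteq K''$ and $M'\sqsubseteq K''$. An isomorphism $\sigma:M\to M'$ is a homomorphism with $\sigma_V(V)\subseteq V'$, such that $\sigma_V:V\to V'$ and $\sigma_{\mathcal W}:\mathcal W\to\mathcal W'$ are bijections and $\sigma^{-1}=\langle\sigma_V^{-1},\sigma_{\mathcal W}^{-1}\rangle$ is a homomorphism $M'\to M$. *)

theory Defs
  imports Main
begin

(* Elements of V \<union> W: nodes and wrappings (disjoint by construction). *)
datatype 'v elem = Nd 'v | Wr "'v set"

(* A model <F, g>: FSW F = <V, W, I> together with the assignment g = <g_N, g_W>.
   'ty = TYPE, 'at = ATTR, 'rel = REL, 'nn = NNAME, 'nv = NVAR, 'wv = WVAR,
   'v = the ambient type of nodes. *)
record ('ty, 'at, 'rel, 'nn, 'nv, 'wv, 'v) model =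
  nodes :: "'v set"
  wraps :: "'v set set"
  tyI   :: "'ty \<Rightarrow> 'v set"
  atI   :: "'at \<Rightarrow> 'v \<Rightarrow> 'v elem option"
  relI  :: "'rel \<Rightarrow> 'v elem list set"
  nmI   :: "'nn \<Rightarrow> 'v option"
  gN    :: "'nv \<Rightarrow> 'v option"
  gW    :: "'wv \<Rightarrow> 'v set option"

definition elems :: "('ty, 'at, 'rel, 'nn, 'nv, 'wv, 'v) model \<Rightarrow> 'v elem set" where
  "elems M = Nd ` nodes M \<union> Wr ` wraps M"

definition wset :: "('ty, 'at, 'rel, 'nn, 'nv, 'wv, 'v) model \<Rightarrow> 'v \<Rightarrow> 'v set" where
  "wset M v = (if \<exists>W\<in>wraps M. v \<in> W then (THE W. W \<in> wraps M \<and> v \<in> W)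
               else nodes M - \<Union>(wraps M))"

(* I_g(k) for node labels k \<in> NLABEL = NNAME \<uplus> NVAR *)
fun lab :: "('ty, 'at, 'rel, 'nn, 'nv, 'wv, 'v) model \<Rightarrow> 'nn + 'nv \<Rightarrow> 'v option" where
  "lab M (Inl b) = nmI M b"
| "lab M (Inr x) = gN M x"

(* I(p)(v) for an attribute word p (read left to right), partial *)
fun apath :: "('ty, 'at, 'rel, 'nn, 'nv, 'wv, 'v) model \<Rightarrow> 'v \<Rightarrow> 'at list \<Rightarrow> 'v elem option" where
  "apath M v [] = Some (Nd v)"
| "apath M v (Q # p) =
     (case atI M Q v of
        None \<Rightarrow> None
      | Some (Nd u) \<Rightarrow> apath M u p
      | Some (Wr w) \<Rightarrow> (if p = [] then Some (Wr w) else None))"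

definition is_model :: "('rel \<Rightarrow> nat) \<Rightarrow> ('ty, 'at, 'rel, 'nn, 'nv, 'wv, 'v) model \<Rightarrow> bool" where
  "is_model ar M \<longleftrightarrow>
     nodes M \<noteq> {} \<and>
     (\<forall>W\<in>wraps M. W \<noteq> {} \<and> W \<subseteq> nodes M) \<and>
     (\<forall>W1\<in>wraps M. \<forall>W2\<in>wraps M. W1 \<noteq> W2 \<longrightarrow> W1 \<inter> W2 = {}) \<and>
     (\<forall>t. tyI M t \<subseteq> nodes M) \<and>
     (\<forall>P v x. atI M P v = Some x \<longrightarrow> v \<in> nodes M \<and> x \<in> elems M) \<and>
     (\<forall>r. \<forall>xs\<in>relI M r. length xs = ar r \<and> set xs \<subseteq> elems M) \<and>
     (\<forall>b v. nmI M b = Some v \<longrightarrow> v \<in> nodes M) \<and>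
     (\<forall>x v. gN M x = Some v \<longrightarrow> v \<in> nodes M) \<and>
     (\<forall>T W. gW M T = Some W \<longrightarrow> W \<in> wraps M) \<and>
     \<comment> \<open>reachability\<close>
     (\<forall>v\<in>nodes M. \<exists>k p u. lab M k = Some u \<and> u \<in> wset M v \<and> apath M u p = Some (Nd v)) \<and>
     \<comment> \<open>non-escapability\<close>
     (\<forall>W\<in>wraps M. \<forall>v\<in>W. \<forall>p x. apath M v p = Some x \<longrightarrow> x \<in> Nd ` wset M v)"

fun hext :: "('a \<Rightarrow> 'b elem) \<Rightarrow> ('a set \<Rightarrow> 'b set) \<Rightarrow> 'a elem \<Rightarrow> 'b elem" where
  "hext hV hW (Nd v) = hV v"
| "hext hV hW (Wr w) = Wr (hW w)"

definition is_hom ::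
  "('ty, 'at, 'rel, 'nn, 'nv, 'wv, 'a) model \<Rightarrow> ('ty, 'at, 'rel, 'nn, 'nv, 'wv, 'b) model \<Rightarrow>
   ('a \<Rightarrow> 'b elem) \<Rightarrow> ('a set \<Rightarrow> 'b set) \<Rightarrow> bool" where
  "is_hom M M' hV hW \<longleftrightarrow>
     (\<forall>v\<in>nodes M. hV v \<in> elems M') \<and>
     (\<forall>W\<in>wraps M. hW W \<in> wraps M') \<and>
     (\<forall>t. \<forall>v\<in>tyI M t. hV v \<in> Nd ` tyI M' t) \<and>
     (\<forall>P v x. atI M P v = Some x \<longrightarrow>
        (\<exists>u. hV v = Nd u \<and> atI M' P u = Some (hext hV hW x))) \<and>
     (\<forall>r. \<forall>xs\<in>relI M r. map (hext hV hW) xs \<in> relI M' r) \<and>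
     (\<forall>b v. nmI M b = Some v \<longrightarrow> (\<exists>u. nmI M' b = Some u \<and> hV v = Nd u)) \<and>
     (\<forall>W\<in>wraps M. \<forall>v\<in>W. \<exists>u. hV v = Nd u \<and> u \<in> hW W) \<and>
     (\<forall>x v. gN M x = Some v \<longrightarrow> (\<exists>u. gN M' x = Some u \<and> hV v = Nd u)) \<and>
     (\<forall>T W. gW M T = Some W \<longrightarrow> gW M' T = Some (hW W))"

definition subsumes ::
  "('ty, 'at, 'rel, 'nn, 'nv, 'wv, 'a) model \<Rightarrow> ('ty, 'at, 'rel, 'nn, 'nv, 'wv, 'b) model \<Rightarrow> bool"
  (infix "\<sqsubseteq>\<^sub>M" 50) where
  "M \<sqsubseteq>\<^sub>M M' \<longleftrightarrow> (\<exists>hV hW. is_hom M M' hV hW)"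

(* K is a least upper bound of {M, M'} among the models (over signature ar) with
   nodes drawn from the type 'v *)
definition is_lub ::
  "('rel \<Rightarrow> nat) \<Rightarrow> ('ty, 'at, 'rel, 'nn, 'nv, 'wv, 'a) model \<Rightarrow> ('ty, 'at, 'rel, 'nn, 'nv, 'wv, 'a) model \<Rightarrow>
   ('ty, 'at, 'rel, 'nn, 'nv, 'wv, 'v) model \<Rightarrow> bool" where
  "is_lub ar M M' K \<longleftrightarrow>
     M \<sqsubseteq>\<^sub>M K \<and> M' \<sqsubseteq>\<^sub>M K \<and>
     (\<forall>K'' :: ('ty, 'at, 'rel, 'nn, 'nv, 'wv, 'v) model.
        is_model ar K'' \<and> M \<sqsubseteq>\<^sub>M K'' \<and> M' \<sqsubseteq>\<^sub>M K'' \<longrightarrow> K \<sqsubseteq>\<^sub>M K'')"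

definition is_iso ::
  "('ty, 'at, 'rel, 'nn, 'nv, 'wv, 'a) model \<Rightarrow> ('ty, 'at, 'rel, 'nn, 'nv, 'wv, 'b) model \<Rightarrow>
   ('a \<Rightarrow> 'b) \<Rightarrow> ('a set \<Rightarrow> 'b set) \<Rightarrow> bool" where
  "is_iso M M' sV sW \<longleftrightarrow>
     bij_betw sV (nodes M) (nodes M') \<and> bij_betw sW (wraps M) (wraps M') \<and>
     is_hom M M' (Nd \<circ> sV) sW \<and>
     is_hom M' M (Nd \<circ> inv_into (nodes M) sV) (inv_into (wraps M) sW)"

definition isomorphic ::
  "('ty, 'at, 'rel, 'nn, 'nv, 'wv, 'a) model \<Rightarrow> ('ty, 'at, 'rel, 'nn, 'nv, 'wv, 'b) model \<Rightarrow> bool" where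
  "isomorphic M M' \<longleftrightarrow> (\<exists>sV sW. is_iso M M' sV sW)"

end

theory Submission
  imports Defs
begin

context fixes M :: "('ty, 'at, 'rel, 'nn, 'nv, 'wv, 'a) model" and M' :: "('ty, 'at, 'rel, 'nn, 'nv, 'wv, 'b) model"
  and hV :: "'a \<Rightarrow> 'b elem" and hW :: "'a set \<Rightarrow> 'b set"
  assumes h: "is_hom M M' hV hW"
begin
lemma hom_el: "v \<in> nodes M \<Longrightarrow> hV v \<in> elems M'" using h unfolding is_hom_def by simp
lemma hom_wr: "W \<in> wraps M \<Longrightarrow> hW W \<in> wraps M'" using h unfolding is_hom_def by simp
lemma hom_ty: "v \<in> tyI M t \<Longrightarrow> hV v \<in> Nd ` tyI M' t" using h unfolding is_hom_def by simp
lemma hom_at: "atI M P v = Some x \<Longrightarrow> \<exists>u. hV v = Nd u \<and> atI M' P u = Some (hext hV hW x)"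
  using h unfolding is_hom_def by simp
lemma hom_rel: "xs \<in> relI M r \<Longrightarrow> map (hext hV hW) xs \<in> relI M' r" using h unfolding is_hom_def by simp
lemma hom_nm: "nmI M b = Some v \<Longrightarrow> \<exists>u. nmI M' b = Some u \<and> hV v = Nd u" using h unfolding is_hom_def by simp
lemma hom_in: "W \<in> wraps M \<Longrightarrow> v \<in> W \<Longrightarrow> \<exists>u. hV v = Nd u \<and> u \<in> hW W" using h unfolding is_hom_def by simp
lemma hom_gN: "gN M x = Some v \<Longrightarrow> \<exists>u. gN M' x = Some u \<and> hV v = Nd u" using h unfolding is_hom_def by simp
lemma hom_gW: "gW M T = Some W \<Longrightarrow> gW M' T = Some (hW W)" using h unfolding is_hom_def by simp
end

context fixes M :: "('ty, 'at, 'rel, 'nn, 'nv, 'wv, 'a) model" and ar :: "'rel \<Rightarrow> nat"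
  assumes m: "is_model ar M"
begin
lemma mod_wne: "W \<in> wraps M \<Longrightarrow> W \<noteq> {}" using m unfolding is_model_def by simp
lemma mod_wsub: "W \<in> wraps M \<Longrightarrow> W \<subseteq> nodes M" using m unfolding is_model_def by simp
lemma mod_disj: "W1 \<in> wraps M \<Longrightarrow> W2 \<in> wraps M \<Longrightarrow> W1 \<noteq> W2 \<Longrightarrow> W1 \<inter> W2 = {}"
  using m unfolding is_model_def by simp
lemma mod_ty: "tyI M t \<subseteq> nodes M" using m unfolding is_model_def by simp
lemma mod_at: "atI M P v = Some x \<Longrightarrow> v \<in> nodes M \<and> x \<in> elems M" using m unfolding is_model_def by simp
lemma mod_rel: "xs \<in> relI M r \<Longrightarrow> set xs \<subseteq> elems M" using m unfolding is_model_def by simp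
lemma mod_nm: "nmI M b = Some v \<Longrightarrow> v \<in> nodes M" using m unfolding is_model_def by simp
lemma mod_gN: "gN M x = Some v \<Longrightarrow> v \<in> nodes M" using m unfolding is_model_def by simp
lemma mod_gW: "gW M T = Some W \<Longrightarrow> W \<in> wraps M" using m unfolding is_model_def by simp
lemma mod_reach: "v \<in> nodes M \<Longrightarrow> \<exists>k p u. lab M k = Some u \<and> u \<in> wset M v \<and> apath M u p = Some (Nd v)"
  using m unfolding is_model_def by simp
end

lemma hext_comp:
  "hext (\<lambda>v. hext gV kW (hV v)) (kW \<circ> hW) x = hext gV kW (hext hV hW x)"
  by (cases x) auto

lemma hom_comp:
  assumes h: "is_hom A B hV hW" and g: "is_hom B C gV kW"
  shows "is_hom A C (\<lambda>v. hext gV kW (hV v)) (kW \<circ> hW)"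
proof -
  have el: "hext gV kW y \<in> elems C" if "y \<in> elems B" for y
  proof (cases y)
    case (Nd u) then show ?thesis using that hom_el[OF g, of u] unfolding elems_def by auto
  next
    case (Wr w) then show ?thesis using that hom_wr[OF g, of w] unfolding elems_def by auto
  qed
  show ?thesis
    unfolding is_hom_def
  proof (intro conjI allI ballI impI)
    fix v assume "v \<in> nodes A"
    then show "hext gV kW (hV v) \<in> elems C" using hom_el[OF h] el by blast
  next
    fix W assume "W \<in> wraps A"
    then show "(kW \<circ> hW) W \<in> wraps C" using hom_wr[OF h] hom_wr[OF g] by simp
  next
    fix t v assume "v \<in> tyI A t"
    then obtain u where "hV v = Nd u" "u \<in> tyI B t" using hom_ty[OF h] by blast
    then show "hext gV kW (hV v) \<in> Nd ` tyI C t" using hom_ty[OF g] by simp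
  next
    fix P v x assume "atI A P v = Some x"
    then obtain u where u: "hV v = Nd u" "atI B P u = Some (hext hV hW x)"
      using hom_at[OF h] by blast
    then obtain u' where "gV u = Nd u'" "atI C P u' = Some (hext gV kW (hext hV hW x))"
      using hom_at[OF g] by blast
    then show "\<exists>u. hext gV kW (hV v) = Nd u \<and> atI C P u = Some (hext (\<lambda>v. hext gV kW (hV v)) (kW \<circ> hW) x)"
      using u by (simp add: hext_comp)
  next
    fix r xs assume "xs \<in> relI A r"
    then have "map (hext gV kW) (map (hext hV hW) xs) \<in> relI C r"
      using hom_rel[OF h] hom_rel[OF g] by blast
    moreover have "map (hext (\<lambda>v. hext gV kW (hV v)) (kW \<circ> hW)) xs = map (hext gV kW) (map (hext hV hW) xs)"
    proof -
      have "hext (\<lambda>v. hext gV kW (hV v)) (kW \<circ> hW) = hext gV kW \<circ> hext hV hW"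
        by (rule ext) (simp only: comp_apply hext_comp)
      then show ?thesis by (simp only: map_map)
    qed
    ultimately show "map (hext (\<lambda>v. hext gV kW (hV v)) (kW \<circ> hW)) xs \<in> relI C r"
      by (simp only:)
  next
    fix b v assume "nmI A b = Some v"
    then obtain u where "nmI B b = Some u" "hV v = Nd u" using hom_nm[OF h] by blast
    then show "\<exists>u. nmI C b = Some u \<and> hext gV kW (hV v) = Nd u" using hom_nm[OF g] by fastforce
  next
    fix W v assume W: "W \<in> wraps A" and v: "v \<in> W"
    then obtain u where u: "hV v = Nd u" "u \<in> hW W" using hom_in[OF h] by blast
    have "hW W \<in> wraps B" using hom_wr[OF h] W by blast
    then obtain u' where "gV u = Nd u'" "u' \<in> kW (hW W)" using hom_in[OF g] u by blast
    then show "\<exists>u. hext gV kW (hV v) = Nd u \<and> u \<in> (kW \<circ> hW) W" using u by simp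
  next
    fix x v assume "gN A x = Some v"
    then obtain u where "gN B x = Some u" "hV v = Nd u" using hom_gN[OF h] by blast
    then show "\<exists>u. gN C x = Some u \<and> hext gV kW (hV v) = Nd u" using hom_gN[OF g] by fastforce
  next
    fix T W assume "gW A T = Some W"
    then show "gW C T = Some ((kW \<circ> hW) W)" using hom_gW[OF h] hom_gW[OF g] by simp
  qed
qed

lemma endo_path:
  assumes e: "is_hom K K eV eW"
  shows "apath K u p = Some (Nd v) \<Longrightarrow> eV u = Nd u \<Longrightarrow> eV v = Nd v"
proof (induction p arbitrary: u)
  case Nil then show ?case by simp
next
  case (Cons Q p)
  show ?case
  proof (cases "atI K Q u")
    case None then show ?thesis using Cons.prems(1) by simp
  next
    case (Some y)
    then obtain u' where u': "eV u = Nd u'" "atI K Q u' = Some (hext eV eW y)"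
      using hom_at[OF e] by blast
    have "u' = u" using u' Cons.prems(2) by simp
    then have y: "hext eV eW y = y" using u'(2) Some by simp
    show ?thesis
    proof (cases y)
      case (Nd w)
      then have "eV w = Nd w" using y by simp
      moreover have "apath K w p = Some (Nd v)" using Cons.prems(1) Some Nd by simp
      ultimately show ?thesis using Cons.IH by blast
    next
      case (Wr w) then show ?thesis using Cons.prems(1) Some by (simp split: if_splits)
    qed
  qed
qed

lemma endo_id:
  assumes K: "is_model ar K" and e: "is_hom K K eV eW"
  shows "\<forall>v\<in>nodes K. eV v = Nd v" "\<forall>W\<in>wraps K. eW W = W"
proof -
  have lab: "eV u = Nd u" if "lab K k = Some u" for k u
  proof (cases k)
    case (Inl b) then show ?thesis using that hom_nm[OF e, of b u] by auto
  next
    case (Inr x) then show ?thesis using that hom_gN[OF e, of x u] by auto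
  qed
  show nd: "\<forall>v\<in>nodes K. eV v = Nd v"
  proof
    fix v assume "v \<in> nodes K"
    then obtain k p u where "lab K k = Some u" "apath K u p = Some (Nd v)"
      using mod_reach[OF K] by blast
    then show "eV v = Nd v" using lab endo_path[OF e] by blast
  qed
  show "\<forall>W\<in>wraps K. eW W = W"
  proof
    fix W assume W: "W \<in> wraps K"
    then obtain v where v: "v \<in> W" using mod_wne[OF K] by blast
    have vn: "v \<in> nodes K" using mod_wsub[OF K W] v by blast
    obtain u where "eV v = Nd u" "u \<in> eW W" using hom_in[OF e W v] by blast
    then have "v \<in> eW W" using nd vn by auto
    moreover have "eW W \<in> wraps K" using hom_wr[OF e W] .
    ultimately show "eW W = W" using mod_disj[OF K] W v by blast
  qed
qed

lemma hom_cong: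
  assumes K: "is_model ar A" and h: "is_hom A B hV hW"
    and cv: "\<forall>v\<in>nodes A. hV' v = hV v" and cw: "\<forall>W\<in>wraps A. hW' W = hW W"
  shows "is_hom A B hV' hW'"
proof -
  have ce: "hext hV' hW' x = hext hV hW x" if "x \<in> elems A" for x
    using that cv cw unfolding elems_def by auto
  show ?thesis
    unfolding is_hom_def
  proof (intro conjI allI ballI impI)
    fix v assume "v \<in> nodes A"
    then show "hV' v \<in> elems B" using hom_el[OF h] cv by auto
  next
    fix W assume "W \<in> wraps A"
    then show "hW' W \<in> wraps B" using hom_wr[OF h] cw by auto
  next
    fix t v assume "v \<in> tyI A t"
    moreover then have "v \<in> nodes A" using mod_ty[OF K] by blast
    ultimately show "hV' v \<in> Nd ` tyI B t" using hom_ty[OF h] cv by auto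
  next
    fix P v x assume a: "atI A P v = Some x"
    then have "v \<in> nodes A" "x \<in> elems A" using mod_at[OF K] by auto
    then show "\<exists>u. hV' v = Nd u \<and> atI B P u = Some (hext hV' hW' x)"
      using hom_at[OF h a] cv ce by auto
  next
    fix r xs assume a: "xs \<in> relI A r"
    then have "set xs \<subseteq> elems A" using mod_rel[OF K] by blast
    then have "map (hext hV' hW') xs = map (hext hV hW) xs" using ce by (auto intro!: map_cong)
    then show "map (hext hV' hW') xs \<in> relI B r" using hom_rel[OF h a] by (simp only:)
  next
    fix b v assume a: "nmI A b = Some v"
    then show "\<exists>u. nmI B b = Some u \<and> hV' v = Nd u" using hom_nm[OF h a] mod_nm[OF K a] cv by auto
  next
    fix W v assume W: "W \<in> wraps A" and v: "v \<in> W"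
    then have "v \<in> nodes A" using mod_wsub[OF K] by blast
    then show "\<exists>u. hV' v = Nd u \<and> u \<in> hW' W" using hom_in[OF h W v] cv cw W by auto
  next
    fix x v assume a: "gN A x = Some v"
    then show "\<exists>u. gN B x = Some u \<and> hV' v = Nd u" using hom_gN[OF h a] mod_gN[OF K a] cv by auto
  next
    fix T W assume a: "gW A T = Some W"
    then show "gW B T = Some (hW' W)" using hom_gW[OF h a] mod_gW[OF K a] cw by auto
  qed
qed

lemma mutual_iso:
  assumes K: "is_model ar K" and K': "is_model ar K'"
    and h: "is_hom K K' hV hW" and g: "is_hom K' K gV kW"
  shows "isomorphic K K'"
proof -
  have e1: "\<forall>v\<in>nodes K. hext gV kW (hV v) = Nd v" "\<forall>W\<in>wraps K. kW (hW W) = W"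
    using endo_id[OF K hom_comp[OF h g]] by auto
  have e2: "\<forall>v\<in>nodes K'. hext hV hW (gV v) = Nd v" "\<forall>W\<in>wraps K'. hW (kW W) = W"
    using endo_id[OF K' hom_comp[OF g h]] by auto
  have hnd: "\<exists>u. hV v = Nd u \<and> u \<in> nodes K'" if "v \<in> nodes K" for v
  proof -
    have "hV v \<in> elems K'" using hom_el[OF h that] .
    moreover have "hext gV kW (hV v) = Nd v" using e1 that by blast
    ultimately show ?thesis unfolding elems_def by auto
  qed
  have gnd: "\<exists>u. gV v = Nd u \<and> u \<in> nodes K" if "v \<in> nodes K'" for v
  proof -
    have "gV v \<in> elems K" using hom_el[OF g that] .
    moreover have "hext hV hW (gV v) = Nd v" using e2 that by blast
    ultimately show ?thesis unfolding elems_def by auto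
  qed
  define sV where "sV v = (THE u. hV v = Nd u)" for v
  define tV where "tV v = (THE u. gV v = Nd u)" for v
  have sV: "hV v = Nd (sV v) \<and> sV v \<in> nodes K'" if "v \<in> nodes K" for v
    using hnd[OF that] unfolding sV_def by auto
  have tV: "gV v = Nd (tV v) \<and> tV v \<in> nodes K" if "v \<in> nodes K'" for v
    using gnd[OF that] unfolding tV_def by auto
  have ts: "tV (sV v) = v" if "v \<in> nodes K" for v
  proof -
    have "hext gV kW (hV v) = Nd v" using e1 that by blast
    then have "gV (sV v) = Nd v" using sV[OF that] by simp
    then show ?thesis using tV[of "sV v"] sV[OF that] by simp
  qed
  have st: "sV (tV v) = v" if "v \<in> nodes K'" for v
  proof -
    have "hext hV hW (gV v) = Nd v" using e2 that by blast
    then have "hV (tV v) = Nd v" using tV[OF that] by simp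
    then show ?thesis using sV[of "tV v"] tV[OF that] by simp
  qed
  have bV: "bij_betw sV (nodes K) (nodes K')"
    by (rule bij_betw_byWitness[where f'=tV]) (use ts st sV tV in auto)
  have hwr: "\<forall>W\<in>wraps K. hW W \<in> wraps K'" using hom_wr[OF h] by blast
  have gwr: "\<forall>W\<in>wraps K'. kW W \<in> wraps K" using hom_wr[OF g] by blast
  have bW: "bij_betw hW (wraps K) (wraps K')"
    by (rule bij_betw_byWitness[where f'=kW]) (use e1 e2 hwr gwr in auto)
  have ivV: "inv_into (nodes K) sV v = tV v" if "v \<in> nodes K'" for v
  proof -
    have "inv_into (nodes K) sV (sV (tV v)) = tV v"
      using bij_betw_inv_into_left[OF bV] tV[OF that] by blast
    then show ?thesis using st[OF that] by simp
  qed
  have ivW: "inv_into (wraps K) hW W = kW W" if "W \<in> wraps K'" for W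
  proof -
    have "inv_into (wraps K) hW (hW (kW W)) = kW W"
      using bij_betw_inv_into_left[OF bW] gwr that by blast
    then show ?thesis using e2(2) that by simp
  qed
  have H1: "is_hom K K' (Nd \<circ> sV) hW"
    by (rule hom_cong[OF K h]) (use sV in auto)
  have H2: "is_hom K' K (Nd \<circ> inv_into (nodes K) sV) (inv_into (wraps K) hW)"
    by (rule hom_cong[OF K' g]) (use tV ivV ivW in auto)
  show ?thesis unfolding isomorphic_def is_iso_def using bV bW H1 H2 by blast
qed

theorem mainTheorem4:
  fixes ar :: "'rel \<Rightarrow> nat"
    and M M' :: "('ty::finite, 'at::finite, 'rel, 'nn, 'nv, 'wv, 'a) model"
    and K K' :: "('ty, 'at, 'rel, 'nn, 'nv, 'wv, 'v) model"
  assumes "\<forall>r. 1 < ar r"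
    and "is_model ar M" and "is_model ar M'"
    and "is_model ar K" and "is_model ar K'"
    and "is_lub ar M M' K" and "is_lub ar M M' K'"
  shows "isomorphic K K'"
proof -
  have "K \<sqsubseteq>\<^sub>M K'" using assms(5,6,7) unfolding is_lub_def by blast
  moreover have "K' \<sqsubseteq>\<^sub>M K" using assms(4,6,7) unfolding is_lub_def by blast
  ultimately show ?thesis using mutual_iso[OF assms(4,5)] unfolding subsumes_def by blast
qed

end
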